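(* Let $p\ge 1$ and let $\hat I\subset\{1,\dots,p\}$. For each $\alpha\in\{1,2\}^p$ let $$A^\alpha=\{(\mu,\nu)\in\mathbb{R}^{2p}: \text{for all } i\in\hat I,\ \mu_i\ge0 \text{ if }\alpha_i=1 \text{ and } \nu_i\ge 0\text{ if }\alpha_i=2\},$$ and let points $(\mu^\alpha,\nu^\alpha)\in A^\alpha$ be given for every $\alpha\in\{1,2\}^p$. Let $B=\operatorname{conv}\{(\mu^\alpha,\nu^\alpha):\alpha\in\{1,2\}^p\}\subset\mathbb{R}^{2p}$. Then there exists $(\bar\mu,\bar\nu)\in B$ such that for all $i\in\hat I$, $$(\bar\mu_i>0\text{ and }\bar\nu_i>0)\ \text{ or }\ \bar\mu_i\bar\nu_i=0.$$ *)

theory Defs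
  imports "HOL-Analysis.Analysis"
begin

text \<open>Index set {1..p} is modelled by a finite type 'n (p = CARD('n) \<ge> 1).
  Sign patterns alpha in {1,2}^p are functions 'n \<Rightarrow> nat with values in {1,2}.\<close>

definition sign_patterns :: "('n::finite \<Rightarrow> nat) set" where
  "sign_patterns = {\<alpha>. \<forall>i. \<alpha> i \<in> {1,2}}"

definition A_set :: "'n::finite set \<Rightarrow> ('n \<Rightarrow> nat) \<Rightarrow> ((real^'n) \<times> (real^'n)) set" where
  "A_set Ihat \<alpha> = {(\<mu>::real^'n, \<nu>::real^'n). \<forall>i\<in>Ihat. (\<alpha> i = 1 \<longrightarrow> \<mu> $ i \<ge> 0) \<and> (\<alpha> i = 2 \<longrightarrow> \<nu> $ i \<ge> 0)}"

end

theory Submission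
  imports Defs
begin

definition phi :: "real \<Rightarrow> real \<Rightarrow> real" where
  "phi a b = max (-b) 0 + min 0 (max (-b) a)"

lemma phi_cont[continuous_intros]:
  "continuous_on S f \<Longrightarrow> continuous_on S g \<Longrightarrow> continuous_on S (\<lambda>x. phi (f x) (g x))"
  unfolding phi_def by (intro continuous_intros)

lemma phi_pos: "a \<ge> 0 \<Longrightarrow> phi a b \<ge> 0"
  unfolding phi_def by auto

lemma phi_neg: "b \<ge> 0 \<Longrightarrow> phi a b \<le> 0"
  unfolding phi_def by auto

lemma phi_zero: "phi a b = 0 \<Longrightarrow> (a > 0 \<and> b > 0) \<or> a * b = 0"
  unfolding phi_def by (cases "b < 0"; cases "a < 0"; auto simp: max_def min_def split: if_splits)

lemma SP_eq: "(sign_patterns :: ('n::finite \<Rightarrow> nat) set) = PiE UNIV (\<lambda>_. {1,2})"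
  unfolding sign_patterns_def by (auto simp: PiE_def extensional_def)

lemma SP_finite: "finite (sign_patterns :: ('n::finite \<Rightarrow> nat) set)"
  unfolding SP_eq by (rule finite_PiE) auto

lemma clamp_pos: "max 0 (min 1 (x + c)) = (x::real) \<Longrightarrow> c > 0 \<Longrightarrow> x = 1"
  by linarith

lemma clamp_neg: "max 0 (min 1 (x + c)) = (x::real) \<Longrightarrow> c < 0 \<Longrightarrow> x = 0"
  by linarith

theorem lemma3p2:
  fixes Ihat :: "'n::finite set"
    and mu nu :: "('n \<Rightarrow> nat) \<Rightarrow> real^'n"
  assumes "\<forall>\<alpha>\<in>sign_patterns. (mu \<alpha>, nu \<alpha>) \<in> A_set Ihat \<alpha>"
  shows "\<exists>(mb, nb) \<in> convex hull ((\<lambda>\<alpha>. (mu \<alpha>, nu \<alpha>)) ` sign_patterns).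
           \<forall>i\<in>Ihat. (mb $ i > 0 \<and> nb $ i > 0) \<or> mb $ i * nb $ i = 0"
proof -
  define SP where "SP = (sign_patterns :: ('n \<Rightarrow> nat) set)"
  have finSP: "finite SP" unfolding SP_def by (rule SP_finite)
  define w where "w t \<alpha> = (\<Prod>i\<in>UNIV. if \<alpha> i = 2 then t $ i else 1 - t $ i)"
    for t :: "real^'n" and \<alpha> :: "'n \<Rightarrow> nat"
  define m where "m t i = (\<Sum>\<alpha>\<in>SP. w t \<alpha> * mu \<alpha> $ i)" for t i
  define n where "n t i = (\<Sum>\<alpha>\<in>SP. w t \<alpha> * nu \<alpha> $ i)" for t i
  define S where "S = cbox (0::real^'n) (vec 1)"
  have memS: "t \<in> S \<longleftrightarrow> (\<forall>i. 0 \<le> t $ i \<and> t $ i \<le> 1)" for t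
    unfolding S_def mem_box_cart by simp
  define g where "g t = (\<chi> i. max 0 (min 1 (t $ i + (if i \<in> Ihat then phi (m t i) (n t i) else 0))))"
    for t
  have contw: "continuous_on S (\<lambda>t. w t \<alpha>)" for \<alpha>
    unfolding w_def
    apply (intro continuous_intros)
    subgoal for i by (cases "\<alpha> i = 2") (auto intro!: continuous_intros)
    done
  have contm: "continuous_on S (\<lambda>t. m t i)" for i
    unfolding m_def by (intro continuous_intros contw)
  have contn: "continuous_on S (\<lambda>t. n t i)" for i
    unfolding n_def by (intro continuous_intros contw)
  have contg: "continuous_on S g"
    unfolding g_def
    apply (intro continuous_intros)
    subgoal for i by (cases "i \<in> Ihat") (auto intro!: continuous_intros contm contn)
    done
  have gS: "g \<in> S \<rightarrow> S"
    unfolding g_def by (auto simp: memS)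
  obtain t where tS: "t \<in> S" and fxp: "g t = t"
  proof -
    have "0 \<in> S" by (simp add: memS)
    moreover have "compact S" "convex S" unfolding S_def by (auto simp: compact_cbox convex_box)
    ultimately show ?thesis using brouwer[of S g] contg gS that by blast
  qed
  have t01: "0 \<le> t $ i" "t $ i \<le> 1" for i using tS memS by auto
  have wnn: "w t \<alpha> \<ge> 0" for \<alpha>
    unfolding w_def using t01 by (intro prod_nonneg) auto
  have wsum: "(\<Sum>\<alpha>\<in>SP. w t \<alpha>) = 1"
  proof -
    have "(\<Prod>i\<in>(UNIV::'n set). \<Sum>a\<in>{1::nat,2}. if a = 2 then t $ i else 1 - t $ i) = 1"
      by simp
    then show ?thesis
      unfolding w_def SP_def SP_eq by (subst (asm) prod_sum_PiE) auto
  qed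
  have m0: "m t i \<ge> 0" if "i \<in> Ihat" "t $ i = 0" for i
    unfolding m_def
  proof (rule sum_nonneg)
    fix \<alpha> assume a: "\<alpha> \<in> SP"
    show "0 \<le> w t \<alpha> * mu \<alpha> $ i"
    proof (cases "\<alpha> i = 2")
      case True
      then have "w t \<alpha> = 0" unfolding w_def using that
        by (intro prod_zero[of UNIV _ ]) (auto intro!: exI[of _ i])
      then show ?thesis by simp
    next
      case False
      then have "\<alpha> i = 1" using a unfolding SP_def sign_patterns_def by auto
      then have "mu \<alpha> $ i \<ge> 0" using assms a that unfolding SP_def A_set_def by auto
      then show ?thesis using wnn by simp
    qed
  qed
  have n1: "n t i \<ge> 0" if "i \<in> Ihat" "t $ i = 1" for i
    unfolding n_def
  proof (rule sum_nonneg)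
    fix \<alpha> assume a: "\<alpha> \<in> SP"
    show "0 \<le> w t \<alpha> * nu \<alpha> $ i"
    proof (cases "\<alpha> i = 1")
      case True
      then have "w t \<alpha> = 0" unfolding w_def using that
        by (intro prod_zero[of UNIV _ ]) (auto intro!: exI[of _ i])
      then show ?thesis by simp
    next
      case False
      then have "\<alpha> i = 2" using a unfolding SP_def sign_patterns_def by auto
      then have "nu \<alpha> $ i \<ge> 0" using assms a that unfolding SP_def A_set_def by auto
      then show ?thesis using wnn by simp
    qed
  qed
  have phi0: "phi (m t i) (n t i) = 0" if "i \<in> Ihat" for i
  proof -
    have e: "max 0 (min 1 (t $ i + phi (m t i) (n t i))) = t $ i"
    proof -
      have "g t $ i = t $ i" using fxp by simp
      then show ?thesis using that unfolding g_def by simp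
    qed
    show ?thesis
    proof (rule ccontr)
      assume ne: "phi (m t i) (n t i) \<noteq> 0"
      show False
      proof (cases "phi (m t i) (n t i) > 0")
        case True
        then have "t $ i = 1" using clamp_pos[OF e] by blast
        then show False using phi_neg[OF n1[OF that], of "m t i"] True by simp
      next
        case False
        then have "phi (m t i) (n t i) < 0" using ne by simp
        then have "t $ i = 0" using clamp_neg[OF e] by blast
        then show False using phi_pos[OF m0[OF that], of "n t i"] \<open>phi (m t i) (n t i) < 0\<close> by simp
      qed
    qed
  qed
  define P where "P = (\<lambda>\<alpha>. (mu \<alpha>, nu \<alpha>))"
  have eq: "(\<Sum>\<alpha>\<in>SP. w t \<alpha> *\<^sub>R P \<alpha>) = ((\<chi> i. m t i), (\<chi> i. n t i))"
    unfolding P_def m_def n_def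
    by (simp add: fst_sum snd_sum prod_eq_iff vec_eq_iff sum_component)
  have "(\<Sum>\<alpha>\<in>SP. w t \<alpha> *\<^sub>R P \<alpha>) \<in> convex hull (P ` SP)"
    by (rule convex_sum[OF finSP convex_convex_hull]) (auto simp: wnn wsum hull_inc)
  then have "((\<chi> i. m t i), (\<chi> i. n t i)) \<in> convex hull ((\<lambda>\<alpha>. (mu \<alpha>, nu \<alpha>)) ` sign_patterns)"
    using eq unfolding P_def SP_def by simp
  moreover have "\<forall>i\<in>Ihat. ((\<chi> i. m t i) $ i > 0 \<and> (\<chi> i. n t i) $ i > 0) \<or> (\<chi> i. m t i) $ i * (\<chi> i. n t i) $ i = 0"
    using phi0 phi_zero by simp
  ultimately show ?thesis by blast
qed

end
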